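(* Let $R_1,R_2$ be discrete valuation domains with maximal ideals $P_1=R_1p_1$ and $P_2=R_2p_2$, let $\overline{R}$ be a field, $\mathcal{V}_i:R_i\to\overline{R}$ surjective ring homomorphisms with $\ker\mathcal{V}_i=P_i$, and $R=\{(r_1,r_2)\in R_1\times R_2:\mathcal{V}_1(r_1)=\mathcal{V}_2(r_2)\}$. Then for all integers $m,n\ge1$ the following separated $R$-modules are indecomposable pseudo-absorbing primary multiplication $R$-modules: (1) $R$; (2) $(R_1/P_1^n\to\overline{R}\leftarrow R_2/P_2^m)$; (3) $(R_1\to\overline{R}\leftarrow R_2/P_2^m)$; (4) $(R_1/P_1^n\to\overline{R}\leftarrow R_2)$.
   Context: For an $R_1$-module $A$ and an $R_2$-module $B$ among $R_1,R_1/P_1^n$ resp. $R_2,R_2/P_2^m$, with $g:A\to\overline{R}$, $h:B\to\overline{R}$ the surjections induced by $\mathcal{V}_1,\mathcal{V}_2$, the notation $(A\to\overline{R}\leftarrow B)$ denotes the $R$-module $\{(a,b)\in A\oplus B:g(a)=h(b)\}$ with $(r_1,r_2)(a,b)=(r_1a,r_2b)$. An $R$-module $S$ is separated if $(P_1\oplus0)S\cap(0\oplus P_2)S=0$, where $P_1\oplus0=\{(a,0):a\in P_1\}$ and $0\oplus P_2=\{(0,b):b\in P_2\}$. A proper ideal $I$ of a commutative ring is 2-absorbing primary if whenever $abc\in I$ then $ab\in I$ or $ac\in\sqrt I$ or $bc\in\sqrt I$. A proper submodule $N$ of an $R$-module $M$ is pseudo-absorbing primary if $(N:_RM)=\{r\in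 R:rM\subseteq N\}$ is a 2-absorbing primary ideal of $R$. $M$ is a pseudo-absorbing primary multiplication module if every pseudo-absorbing primary submodule $N$ of $M$ satisfies $N=IM$ for some ideal $I$ of $R$. *)

theory Defs
  imports "HOL-Algebra.Algebra"
begin

definition dvr :: "('a, 'm) ring_scheme \<Rightarrow> bool" where
  "dvr R \<longleftrightarrow> principal_domain R \<and> \<not> field R \<and> (\<exists>!P. maximalideal P R)"

definition pullback_ring ::
  "('a, 'm) ring_scheme \<Rightarrow> ('b, 'n) ring_scheme \<Rightarrow> ('a \<Rightarrow> 'c) \<Rightarrow> ('b \<Rightarrow> 'c) \<Rightarrow> ('a \<times> 'b) ring" where
  "pullback_ring R1 R2 V1 V2 =
     \<lparr>carrier = {(r1, r2). r1 \<in> carrier R1 \<and> r2 \<in> carrier R2 \<and> V1 r1 = V2 r2},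
      monoid.mult = (\<lambda>x y. (fst x \<otimes>\<^bsub>R1\<^esub> fst y, snd x \<otimes>\<^bsub>R2\<^esub> snd y)),
      monoid.one = (\<one>\<^bsub>R1\<^esub>, \<one>\<^bsub>R2\<^esub>),
      ring.zero = (\<zero>\<^bsub>R1\<^esub>, \<zero>\<^bsub>R2\<^esub>),
      ring.add = (\<lambda>x y. (fst x \<oplus>\<^bsub>R1\<^esub> fst y, snd x \<oplus>\<^bsub>R2\<^esub> snd y))\<rparr>"

definition self_module :: "('a, 'm) ring_scheme \<Rightarrow> ('a, 'a) module" where
  "self_module R =
     \<lparr>carrier = carrier R, monoid.mult = monoid.mult R, monoid.one = monoid.one R,
      ring.zero = ring.zero R, ring.add = ring.add R, module.smult = monoid.mult R\<rparr>"

definition quot_module :: "('a, 'm) ring_scheme \<Rightarrow> 'a set \<Rightarrow> ('a, 'a set) module" where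
  "quot_module R I =
     \<lparr>carrier = a_rcosets\<^bsub>R\<^esub> I, monoid.mult = rcoset_mult R I, monoid.one = a_r_coset R I \<one>\<^bsub>R\<^esub>,
      ring.zero = I, ring.add = set_add R,
      module.smult = (\<lambda>s Y. rcoset_mult R I (a_r_coset R I s) Y)\<rparr>"

(* The map R/I \<rightarrow> Rbar induced by V (for I contained in the kernel of V). *)
definition induced_map :: "('a \<Rightarrow> 'c) \<Rightarrow> 'a set \<Rightarrow> 'c" where
  "induced_map f S = the_elem (f ` S)"

(* (A \<rightarrow> Rbar \<leftarrow> B) = {(a,b) \<in> A \<oplus> B : g a = h b}, with (r1,r2)(a,b) = (r1 a, r2 b). *)
definition pb_module ::
  "('a, 'x, 'p) module_scheme \<Rightarrow> ('b, 'y, 'q) module_scheme \<Rightarrow> ('x \<Rightarrow> 'c) \<Rightarrow> ('y \<Rightarrow> 'c)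
     \<Rightarrow> ('a \<times> 'b, 'x \<times> 'y) module" where
  "pb_module A B g h =
     \<lparr>carrier = {(a, b). a \<in> carrier A \<and> b \<in> carrier B \<and> g a = h b},
      monoid.mult = (\<lambda>_ _. (\<zero>\<^bsub>A\<^esub>, \<zero>\<^bsub>B\<^esub>)),
      monoid.one = (\<zero>\<^bsub>A\<^esub>, \<zero>\<^bsub>B\<^esub>),
      ring.zero = (\<zero>\<^bsub>A\<^esub>, \<zero>\<^bsub>B\<^esub>),
      ring.add = (\<lambda>x y. (fst x \<oplus>\<^bsub>A\<^esub> fst y, snd x \<oplus>\<^bsub>B\<^esub> snd y)),
      module.smult = (\<lambda>r x. (fst r \<odot>\<^bsub>A\<^esub> fst x, snd r \<odot>\<^bsub>B\<^esub> snd x))\<rparr>"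

definition ideal_mod_prod ::
  "('r, 'm) ring_scheme \<Rightarrow> 'r set \<Rightarrow> ('r, 'x, 'p) module_scheme \<Rightarrow> 'x set" where
  "ideal_mod_prod R I M =
     \<Inter>{N. submodule N R M \<and> {r \<odot>\<^bsub>M\<^esub> x | r x. r \<in> I \<and> x \<in> carrier M} \<subseteq> N}"

definition mod_colon ::
  "('r, 'm) ring_scheme \<Rightarrow> 'x set \<Rightarrow> ('r, 'x, 'p) module_scheme \<Rightarrow> 'r set" where
  "mod_colon R N M = {r \<in> carrier R. \<forall>x \<in> carrier M. r \<odot>\<^bsub>M\<^esub> x \<in> N}"

definition radical :: "('r, 'm) ring_scheme \<Rightarrow> 'r set \<Rightarrow> 'r set" where
  "radical R I = {r \<in> carrier R. \<exists>k::nat. r [^]\<^bsub>R\<^esub> k \<in> I}"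

definition two_absorbing_primary :: "('r, 'm) ring_scheme \<Rightarrow> 'r set \<Rightarrow> bool" where
  "two_absorbing_primary R I \<longleftrightarrow> ideal I R \<and> I \<noteq> carrier R \<and>
     (\<forall>a \<in> carrier R. \<forall>b \<in> carrier R. \<forall>c \<in> carrier R.
        a \<otimes>\<^bsub>R\<^esub> b \<otimes>\<^bsub>R\<^esub> c \<in> I \<longrightarrow>
        a \<otimes>\<^bsub>R\<^esub> b \<in> I \<or> a \<otimes>\<^bsub>R\<^esub> c \<in> radical R I \<or> b \<otimes>\<^bsub>R\<^esub> c \<in> radical R I)"

definition pseudo_absorbing_primary ::
  "('r, 'm) ring_scheme \<Rightarrow> ('r, 'x, 'p) module_scheme \<Rightarrow> 'x set \<Rightarrow> bool" where
  "pseudo_absorbing_primary R M N \<longleftrightarrow> submodule N R M \<and> N \<noteq> carrier M \<and>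
     two_absorbing_primary R (mod_colon R N M)"

definition pap_multiplication_module ::
  "('r, 'm) ring_scheme \<Rightarrow> ('r, 'x, 'p) module_scheme \<Rightarrow> bool" where
  "pap_multiplication_module R M \<longleftrightarrow>
     (\<forall>N. pseudo_absorbing_primary R M N \<longrightarrow> (\<exists>I. ideal I R \<and> N = ideal_mod_prod R I M))"

definition indecomposable ::
  "('r, 'm) ring_scheme \<Rightarrow> ('r, 'x, 'p) module_scheme \<Rightarrow> bool" where
  "indecomposable R M \<longleftrightarrow> carrier M \<noteq> {\<zero>\<^bsub>M\<^esub>} \<and>
     \<not> (\<exists>N K. submodule N R M \<and> submodule K R M \<and> N \<noteq> {\<zero>\<^bsub>M\<^esub>} \<and> K \<noteq> {\<zero>\<^bsub>M\<^esub>} \<and>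
            N \<inter> K = {\<zero>\<^bsub>M\<^esub>} \<and> set_add M N K = carrier M)"

definition separated ::
  "('a, 'm) ring_scheme \<Rightarrow> ('b, 'n) ring_scheme \<Rightarrow> ('a \<Rightarrow> 'c) \<Rightarrow> ('b \<Rightarrow> 'c) \<Rightarrow> 'a set \<Rightarrow> 'b set
     \<Rightarrow> ('a \<times> 'b, 'x, 'p) module_scheme \<Rightarrow> bool" where
  "separated R1 R2 V1 V2 P1 P2 S \<longleftrightarrow>
     ideal_mod_prod (pullback_ring R1 R2 V1 V2) {(a, \<zero>\<^bsub>R2\<^esub>) | a. a \<in> P1} S \<inter>
     ideal_mod_prod (pullback_ring R1 R2 V1 V2) {(\<zero>\<^bsub>R1\<^esub>, b) | b. b \<in> P2} S = {\<zero>\<^bsub>S\<^esub>}"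

end

theory Submission
  imports Defs
begin

lemma pullback_simps:
  "carrier (pullback_ring R1 R2 V1 V2) = {(r1, r2). r1 \<in> carrier R1 \<and> r2 \<in> carrier R2 \<and> V1 r1 = V2 r2}"
  "x \<otimes>\<^bsub>pullback_ring R1 R2 V1 V2\<^esub> y = (fst x \<otimes>\<^bsub>R1\<^esub> fst y, snd x \<otimes>\<^bsub>R2\<^esub> snd y)"
  "\<one>\<^bsub>pullback_ring R1 R2 V1 V2\<^esub> = (\<one>\<^bsub>R1\<^esub>, \<one>\<^bsub>R2\<^esub>)"
  "\<zero>\<^bsub>pullback_ring R1 R2 V1 V2\<^esub> = (\<zero>\<^bsub>R1\<^esub>, \<zero>\<^bsub>R2\<^esub>)"
  "x \<oplus>\<^bsub>pullback_ring R1 R2 V1 V2\<^esub> y = (fst x \<oplus>\<^bsub>R1\<^esub> fst y, snd x \<oplus>\<^bsub>R2\<^esub> snd y)"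
  by (simp_all add: pullback_ring_def)

lemma pullback_cring:
  assumes c1: "cring R1" and c2: "cring R2" and rb: "ring Rb"
    and h1: "V1 \<in> ring_hom R1 Rb" and h2: "V2 \<in> ring_hom R2 Rb"
  shows "cring (pullback_ring R1 R2 V1 V2)"
proof -
  interpret r1: cring R1 by fact
  interpret r2: cring R2 by fact
  interpret h1: ring_hom_ring R1 Rb V1 using ring_hom_ringI2[OF r1.ring_axioms rb h1] .
  interpret h2: ring_hom_ring R2 Rb V2 using ring_hom_ringI2[OF r2.ring_axioms rb h2] .
  let ?R = "pullback_ring R1 R2 V1 V2"
  show ?thesis
  proof (rule cringI)
    show "abelian_group ?R"
      apply (rule abelian_groupI)
      apply (auto simp: pullback_simps r1.a_ac r2.a_ac)
      subgoal for a b
        by (rule exI[of _ "\<ominus>\<^bsub>R1\<^esub> a"], rule conjI, simp, rule exI[of _ "\<ominus>\<^bsub>R2\<^esub> b"]) (auto simp: h1.hom_a_inv h2.hom_a_inv r1.l_neg r2.l_neg)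
      done
  next
    show "comm_monoid ?R"
      by (rule comm_monoidI) (auto simp: pullback_simps r1.m_ac r2.m_ac)
  next
    show "\<And>x y z. x \<in> carrier ?R \<Longrightarrow> y \<in> carrier ?R \<Longrightarrow> z \<in> carrier ?R \<Longrightarrow>
      (x \<oplus>\<^bsub>?R\<^esub> y) \<otimes>\<^bsub>?R\<^esub> z = x \<otimes>\<^bsub>?R\<^esub> z \<oplus>\<^bsub>?R\<^esub> y \<otimes>\<^bsub>?R\<^esub> z"
      by (auto simp: pullback_simps r1.l_distr r2.l_distr)
  qed
qed

lemma (in module) submodule_zero: "submodule N R M \<Longrightarrow> \<zero>\<^bsub>M\<^esub> \<in> N"
  using subgroup.one_closed[OF submodule.axioms(1)] by force

lemma (in module) my_submoduleI:
  assumes "H \<subseteq> carrier M" "\<zero>\<^bsub>M\<^esub> \<in> H"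
    "\<And>a b. a \<in> H \<Longrightarrow> b \<in> H \<Longrightarrow> a \<oplus>\<^bsub>M\<^esub> b \<in> H"
    "\<And>a x. a \<in> carrier R \<Longrightarrow> x \<in> H \<Longrightarrow> a \<odot>\<^bsub>M\<^esub> x \<in> H"
  shows "submodule H R M"
proof (rule submoduleI)
  fix a assume a: "a \<in> H"
  have "(\<ominus> \<one>) \<odot>\<^bsub>M\<^esub> a = \<ominus>\<^bsub>M\<^esub> (\<one> \<odot>\<^bsub>M\<^esub> a)"
    using a assms(1) by (intro smult_l_minus) auto
  then show "\<ominus>\<^bsub>M\<^esub> a \<in> H" using a assms(1) assms(4)[of "\<ominus> \<one>" a] by auto
qed (use assms in auto)

lemma (in module) colon_ideal:
  assumes N: "submodule N R M"
  shows "ideal (mod_colon R N M) R"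
proof (rule idealI)
  show "ring R" by (rule ring_axioms)
  show "subgroup (mod_colon R N M) (add_monoid R)"
  proof (rule R.add.subgroupI)
    show "mod_colon R N M \<subseteq> carrier R" by (auto simp: mod_colon_def)
    have "\<zero> \<in> mod_colon R N M" using submodule_zero[OF N] by (auto simp: mod_colon_def)
    then show "mod_colon R N M \<noteq> {}" by auto
  next
    fix a assume a: "a \<in> mod_colon R N M"
    show "\<ominus> a \<in> mod_colon R N M"
      using a submoduleE(3)[OF N] by (auto simp: mod_colon_def smult_l_minus)
  next
    fix a b assume "a \<in> mod_colon R N M" "b \<in> mod_colon R N M"
    then show "a \<oplus> b \<in> mod_colon R N M"
      using submoduleE(5)[OF N] by (auto simp: mod_colon_def smult_l_distr)
  qed
next
  fix a x assume "a \<in> mod_colon R N M" "x \<in> carrier R"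
  then show "x \<otimes> a \<in> mod_colon R N M"
    using submoduleE(4)[OF N] by (auto simp: mod_colon_def smult_assoc1 m_comm)
next
  fix a x assume "a \<in> mod_colon R N M" "x \<in> carrier R"
  then show "a \<otimes> x \<in> mod_colon R N M"
    using submoduleE(4)[OF N] by (auto simp: mod_colon_def smult_assoc1)
qed

lemma (in module) cyclic_submodule_eq:
  assumes x: "x \<in> carrier M" and cyc: "carrier M = {r \<odot>\<^bsub>M\<^esub> x | r. r \<in> carrier R}"
    and N: "submodule N R M"
  shows "N = ideal_mod_prod R (mod_colon R N M) M"
proof
  show "ideal_mod_prod R (mod_colon R N M) M \<subseteq> N"
    unfolding ideal_mod_prod_def using N by (auto simp: mod_colon_def)
next
  show "N \<subseteq> ideal_mod_prod R (mod_colon R N M) M"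
  proof
    fix z assume z: "z \<in> N"
    then have "z \<in> carrier M" using submoduleE(1)[OF N] by auto
    then obtain r where r: "r \<in> carrier R" "z = r \<odot>\<^bsub>M\<^esub> x" using cyc by auto
    have "r \<in> mod_colon R N M"
      unfolding mod_colon_def
    proof (safe intro!: r(1))
      fix y assume "y \<in> carrier M"
      then obtain s where s: "s \<in> carrier R" "y = s \<odot>\<^bsub>M\<^esub> x" using cyc by auto
      have "r \<odot>\<^bsub>M\<^esub> y = (r \<otimes> s) \<odot>\<^bsub>M\<^esub> x" using s r x by (simp add: smult_assoc1)
      also have "\<dots> = (s \<otimes> r) \<odot>\<^bsub>M\<^esub> x" using s r by (simp add: m_comm)
      also have "\<dots> = s \<odot>\<^bsub>M\<^esub> z" using s r x by (simp add: smult_assoc1)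
      finally show "r \<odot>\<^bsub>M\<^esub> y \<in> N" using submoduleE(4)[OF N] s z by auto
    qed
    then show "z \<in> ideal_mod_prod R (mod_colon R N M) M"
      unfolding ideal_mod_prod_def using r x by blast
  qed
qed

lemma (in module) cyclic_pap:
  assumes x: "x \<in> carrier M" and cyc: "carrier M = {r \<odot>\<^bsub>M\<^esub> x | r. r \<in> carrier R}"
  shows "pap_multiplication_module R M"
  unfolding pap_multiplication_module_def pseudo_absorbing_primary_def
  using cyclic_submodule_eq[OF x cyc] colon_ideal by blast

lemma (in module) cyclic_indecomp:
  assumes x: "x \<in> carrier M" and cyc: "carrier M = {r \<odot>\<^bsub>M\<^esub> x | r. r \<in> carrier R}"
    and nz: "x \<noteq> \<zero>\<^bsub>M\<^esub>"
    and loc1: "\<And>a. a \<in> carrier R \<Longrightarrow> \<not> \<phi> a \<Longrightarrow> a \<in> Units R"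
    and loc2: "\<And>a b. a \<in> carrier R \<Longrightarrow> b \<in> carrier R \<Longrightarrow> \<phi> a \<Longrightarrow> \<phi> b \<Longrightarrow>
               \<not> \<phi> (\<one> \<ominus> (a \<oplus> b))"
  shows "indecomposable R M"
  unfolding indecomposable_def
proof (intro conjI notI)
  show "carrier M = {\<zero>\<^bsub>M\<^esub>} \<Longrightarrow> False" using x nz by auto
next
  assume "\<exists>N K. submodule N R M \<and> submodule K R M \<and> N \<noteq> {\<zero>\<^bsub>M\<^esub>} \<and> K \<noteq> {\<zero>\<^bsub>M\<^esub>} \<and>
            N \<inter> K = {\<zero>\<^bsub>M\<^esub>} \<and> set_add M N K = carrier M"
  then obtain N K where N: "submodule N R M" and K: "submodule K R M"
    and Nz: "N \<noteq> {\<zero>\<^bsub>M\<^esub>}" and Kz: "K \<noteq> {\<zero>\<^bsub>M\<^esub>}" and NK: "N \<inter> K = {\<zero>\<^bsub>M\<^esub>}"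
    and sum: "set_add M N K = carrier M" by blast
  have NM: "N \<subseteq> carrier M" and KM: "K \<subseteq> carrier M"
    using submoduleE(1)[OF N] submoduleE(1)[OF K] .
  have "x \<in> set_add M N K" using x sum by simp
  then obtain u v where u: "u \<in> N" and v: "v \<in> K" and xuv: "x = u \<oplus>\<^bsub>M\<^esub> v"
    unfolding set_add_def' by blast
  have uM: "u \<in> carrier M" and vM: "v \<in> carrier M" using u v NM KM by auto
  obtain a where a: "a \<in> carrier R" "u = a \<odot>\<^bsub>M\<^esub> x" using uM cyc by auto
  obtain b where b: "b \<in> carrier R" "v = b \<odot>\<^bsub>M\<^esub> x" using vM cyc by auto
  have full: "carrier M \<subseteq> H" if H: "submodule H R M" "x \<in> H" for H
    using cyc submoduleE(4)[OF H(1)] H(2) by auto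
  have unit_case: "False" if H: "submodule H R M" "submodule H' R M" "H \<inter> H' = {\<zero>\<^bsub>M\<^esub>}"
    "H' \<noteq> {\<zero>\<^bsub>M\<^esub>}" "c \<in> Units R" "c \<odot>\<^bsub>M\<^esub> x \<in> H" for H H' c
  proof -
    have "inv c \<odot>\<^bsub>M\<^esub> (c \<odot>\<^bsub>M\<^esub> x) = x"
      using H(5) x by (simp add: smult_assoc1[symmetric] Units_closed)
    then have "x \<in> H" using submoduleE(4)[OF H(1), of "inv c"] H(5,6) by (metis Units_inv_closed)
    then have "carrier M \<subseteq> H" using full H(1) by auto
    then have "H' \<subseteq> {\<zero>\<^bsub>M\<^esub>}" using H(3) submoduleE(1)[OF H(2)] by auto
    then show False using H(4) submodule_zero[OF H(2)] by auto
  qed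
  show False
  proof (cases "\<phi> a")
    case False
    then show False using unit_case[OF N K NK Kz loc1[OF a(1)]] a u by auto
  next
    case pa: True
    show False
    proof (cases "\<phi> b")
      case False
      then show False using unit_case[OF K N _ Nz loc1[OF b(1)]] b v NK by auto
    next
      case pb: True
      have U: "\<one> \<ominus> (a \<oplus> b) \<in> Units R" using loc1 loc2[OF a(1) b(1) pa pb] a b by auto
      have "(\<one> \<ominus> (a \<oplus> b)) \<odot>\<^bsub>M\<^esub> x = x \<oplus>\<^bsub>M\<^esub> (\<ominus>\<^bsub>M\<^esub> ((a \<oplus> b) \<odot>\<^bsub>M\<^esub> x))"
      proof -
        have ab: "a \<oplus> b \<in> carrier R" using a b by simp
        have "(\<one> \<ominus> (a \<oplus> b)) \<odot>\<^bsub>M\<^esub> x = (\<one> \<oplus> \<ominus> (a \<oplus> b)) \<odot>\<^bsub>M\<^esub> x"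
          by (simp add: R.minus_eq)
        also have "\<dots> = \<one> \<odot>\<^bsub>M\<^esub> x \<oplus>\<^bsub>M\<^esub> (\<ominus> (a \<oplus> b)) \<odot>\<^bsub>M\<^esub> x"
          using ab x by (simp add: smult_l_distr)
        finally show ?thesis using ab x by (simp add: smult_l_minus)
      qed
      also have "(a \<oplus> b) \<odot>\<^bsub>M\<^esub> x = x"
      proof -
        have "(a \<oplus> b) \<odot>\<^bsub>M\<^esub> x = u \<oplus>\<^bsub>M\<^esub> v" using a b x by (simp add: smult_l_distr)
        then show ?thesis using xuv by simp
      qed
      also have "x \<oplus>\<^bsub>M\<^esub> (\<ominus>\<^bsub>M\<^esub> x) = \<zero>\<^bsub>M\<^esub>" using x by (rule M.r_neg)
      finally have "(\<one> \<ominus> (a \<oplus> b)) \<odot>\<^bsub>M\<^esub> x = \<zero>\<^bsub>M\<^esub>" .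
      then have "inv (\<one> \<ominus> (a \<oplus> b)) \<odot>\<^bsub>M\<^esub> ((\<one> \<ominus> (a \<oplus> b)) \<odot>\<^bsub>M\<^esub> x) = \<zero>\<^bsub>M\<^esub>"
        using U by simp
      moreover have "inv (\<one> \<ominus> (a \<oplus> b)) \<odot>\<^bsub>M\<^esub> ((\<one> \<ominus> (a \<oplus> b)) \<odot>\<^bsub>M\<^esub> x) = x"
        using U x by (simp add: smult_assoc1[symmetric] Units_closed)
      ultimately show False using nz by simp
    qed
  qed
qed

lemma module_via_hom:
  fixes R :: "('r, 'm1) ring_scheme" and S :: "('s, 'm2) ring_scheme"
    and M :: "('r, 's, 'p) module_scheme"
  assumes R: "cring R" and S: "cring S" and phi: "\<phi> \<in> ring_hom R S"
    and c: "carrier M = carrier S" and a: "\<And>x y. x \<oplus>\<^bsub>M\<^esub> y = x \<oplus>\<^bsub>S\<^esub> y"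
    and z: "\<zero>\<^bsub>M\<^esub> = \<zero>\<^bsub>S\<^esub>" and sm: "\<And>r x. r \<odot>\<^bsub>M\<^esub> x = \<phi> r \<otimes>\<^bsub>S\<^esub> x"
  shows "module R M"
proof -
  interpret r: cring R by fact
  interpret s: cring S by fact
  interpret h: ring_hom_cring R S \<phi>
    using phi by (intro ring_hom_cringI R S) 
  show ?thesis
  proof (rule moduleI)
    show "abelian_group M"
      apply (rule abelian_groupI)
      by (auto simp: c a z s.a_ac)
  qed (auto simp: R c a z sm s.l_distr s.r_distr s.m_assoc)
qed

lemma self_module_module: "cring R \<Longrightarrow> module R (self_module R)"
  by (rule module_via_hom[where S=R and \<phi>=id]) (auto simp: self_module_def)

lemma quot_module_module:
  assumes R: "cring R" and I: "ideal I R"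
  shows "module R (quot_module R I)"
proof -
  interpret cring R by fact
  interpret ideal I R by fact
  show ?thesis
    by (rule module_via_hom[where S="R Quot I" and \<phi>="a_r_coset R I"])
       (simp_all add: R quotient_is_cring rcos_ring_hom, simp_all add: quot_module_def FactRing_def)
qed

lemma pb_simps:
  "carrier (pb_module A B g h) = {(a, b). a \<in> carrier A \<and> b \<in> carrier B \<and> g a = h b}"
  "\<zero>\<^bsub>pb_module A B g h\<^esub> = (\<zero>\<^bsub>A\<^esub>, \<zero>\<^bsub>B\<^esub>)"
  "x \<oplus>\<^bsub>pb_module A B g h\<^esub> y = (fst x \<oplus>\<^bsub>A\<^esub> fst y, snd x \<oplus>\<^bsub>B\<^esub> snd y)"
  "r \<odot>\<^bsub>pb_module A B g h\<^esub> x = (fst r \<odot>\<^bsub>A\<^esub> fst x, snd r \<odot>\<^bsub>B\<^esub> snd x)"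
  by (simp_all add: pb_module_def)

locale pbm =
  fixes R1 :: "('a, 'm) ring_scheme" and R2 :: "('b, 'n) ring_scheme" and Rb :: "('c, 'o) ring_scheme"
    and V1 V2 and A :: "('a, 'x, 'p) module_scheme" and B :: "('b, 'y, 'q) module_scheme"
    and g h x1 x2
  assumes rb: "field Rb" and h1: "V1 \<in> ring_hom R1 Rb" and h2: "V2 \<in> ring_hom R2 Rb"
    and mA: "module R1 A" and mB: "module R2 B"
    and gc: "\<And>a. a \<in> carrier A \<Longrightarrow> g a \<in> carrier Rb"
    and ga: "\<And>a b. a \<in> carrier A \<Longrightarrow> b \<in> carrier A \<Longrightarrow> g (a \<oplus>\<^bsub>A\<^esub> b) = g a \<oplus>\<^bsub>Rb\<^esub> g b"
    and gs: "\<And>r a. r \<in> carrier R1 \<Longrightarrow> a \<in> carrier A \<Longrightarrow> g (r \<odot>\<^bsub>A\<^esub> a) = V1 r \<otimes>\<^bsub>Rb\<^esub> g a"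
    and x1: "x1 \<in> carrier A" and gx1: "g x1 = \<one>\<^bsub>Rb\<^esub>"
    and gen1: "\<And>a. a \<in> carrier A \<Longrightarrow> \<exists>r\<in>carrier R1. a = r \<odot>\<^bsub>A\<^esub> x1"
    and hc: "\<And>a. a \<in> carrier B \<Longrightarrow> h a \<in> carrier Rb"
    and ha: "\<And>a b. a \<in> carrier B \<Longrightarrow> b \<in> carrier B \<Longrightarrow> h (a \<oplus>\<^bsub>B\<^esub> b) = h a \<oplus>\<^bsub>Rb\<^esub> h b"
    and hs: "\<And>r a. r \<in> carrier R2 \<Longrightarrow> a \<in> carrier B \<Longrightarrow> h (r \<odot>\<^bsub>B\<^esub> a) = V2 r \<otimes>\<^bsub>Rb\<^esub> h a"
    and x2: "x2 \<in> carrier B" and hx2: "h x2 = \<one>\<^bsub>Rb\<^esub>"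
    and gen2: "\<And>a. a \<in> carrier B \<Longrightarrow> \<exists>r\<in>carrier R2. a = r \<odot>\<^bsub>B\<^esub> x2"
begin

interpretation A: module R1 A by (rule mA)
interpretation B: module R2 B by (rule mB)
interpretation F: field Rb by (rule rb)
interpretation H1: ring_hom_cring R1 Rb V1
  using h1 by (intro ring_hom_cringI A.R.is_cring F.is_cring)
interpretation H2: ring_hom_cring R2 Rb V2
  using h2 by (intro ring_hom_cringI B.R.is_cring F.is_cring)

lemma g0: "g \<zero>\<^bsub>A\<^esub> = \<zero>\<^bsub>Rb\<^esub>"
proof -
  have "g \<zero>\<^bsub>A\<^esub> = g (\<zero>\<^bsub>R1\<^esub> \<odot>\<^bsub>A\<^esub> x1)" using x1 by simp
  also have "\<dots> = \<zero>\<^bsub>Rb\<^esub>" using x1 gs[of "\<zero>\<^bsub>R1\<^esub>" x1] gx1 by simp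
  finally show ?thesis .
qed

lemma h0: "h \<zero>\<^bsub>B\<^esub> = \<zero>\<^bsub>Rb\<^esub>"
proof -
  have "h \<zero>\<^bsub>B\<^esub> = h (\<zero>\<^bsub>R2\<^esub> \<odot>\<^bsub>B\<^esub> x2)" using x2 by simp
  also have "\<dots> = \<zero>\<^bsub>Rb\<^esub>" using x2 hs[of "\<zero>\<^bsub>R2\<^esub>" x2] hx2 by simp
  finally show ?thesis .
qed

lemma gneg: "a \<in> carrier A \<Longrightarrow> g (\<ominus>\<^bsub>A\<^esub> a) = \<ominus>\<^bsub>Rb\<^esub> g a"
proof -
  assume a: "a \<in> carrier A"
  have "\<ominus>\<^bsub>A\<^esub> a = (\<ominus>\<^bsub>R1\<^esub> \<one>\<^bsub>R1\<^esub>) \<odot>\<^bsub>A\<^esub> a" using a by (simp add: A.smult_l_minus)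
  then show ?thesis using a gs[of "\<ominus>\<^bsub>R1\<^esub> \<one>\<^bsub>R1\<^esub>" a] gc[OF a]
    by (simp add: H1.hom_a_inv F.l_minus)
qed

lemma hneg: "a \<in> carrier B \<Longrightarrow> h (\<ominus>\<^bsub>B\<^esub> a) = \<ominus>\<^bsub>Rb\<^esub> h a"
proof -
  assume a: "a \<in> carrier B"
  have "\<ominus>\<^bsub>B\<^esub> a = (\<ominus>\<^bsub>R2\<^esub> \<one>\<^bsub>R2\<^esub>) \<odot>\<^bsub>B\<^esub> a" using a by (simp add: B.smult_l_minus)
  then show ?thesis using a hs[of "\<ominus>\<^bsub>R2\<^esub> \<one>\<^bsub>R2\<^esub>" a] hc[OF a]
    by (simp add: H2.hom_a_inv F.l_minus)
qed

abbreviation "RR \<equiv> pullback_ring R1 R2 V1 V2"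
abbreviation "MM \<equiv> pb_module A B g h"

lemma pb_module_is_module: "module RR MM"
proof (rule moduleI)
  show "cring RR" by (rule pullback_cring[OF A.R.is_cring B.R.is_cring F.ring_axioms h1 h2])
  show "abelian_group MM"
    apply (rule abelian_groupI)
    apply (auto simp: pb_simps A.a_ac B.a_ac ga ha g0 h0)
    subgoal for a b
      by (rule exI[of _ "\<ominus>\<^bsub>A\<^esub> a"], rule conjI, simp, rule exI[of _ "\<ominus>\<^bsub>B\<^esub> b"])
         (auto simp: gneg hneg A.l_neg B.l_neg)
    done
qed (auto simp: pb_simps pullback_simps gs hs A.smult_l_distr B.smult_l_distr A.smult_r_distr
   B.smult_r_distr A.smult_assoc1 B.smult_assoc1 ga ha)

lemma gen_in: "(x1, x2) \<in> carrier MM"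
  using x1 x2 gx1 hx2 by (simp add: pb_simps)

lemma gen_nz: "(x1, x2) \<noteq> \<zero>\<^bsub>MM\<^esub>"
  using gx1 g0 by (auto simp: pb_simps)

lemma pb_cyclic: "carrier MM = {r \<odot>\<^bsub>MM\<^esub> (x1, x2) | r. r \<in> carrier RR}"
proof
  show "{r \<odot>\<^bsub>MM\<^esub> (x1, x2) | r. r \<in> carrier RR} \<subseteq> carrier MM"
    using module.smult_closed[OF pb_module_is_module] gen_in by auto
next
  show "carrier MM \<subseteq> {r \<odot>\<^bsub>MM\<^esub> (x1, x2) | r. r \<in> carrier RR}"
  proof
    fix y assume y: "y \<in> carrier MM"
    then obtain a b where ab: "y = (a, b)" "a \<in> carrier A" "b \<in> carrier B" "g a = h b"
      by (auto simp: pb_simps)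
    obtain r1 where r1: "r1 \<in> carrier R1" "a = r1 \<odot>\<^bsub>A\<^esub> x1" using gen1 ab(2) by blast
    obtain r2 where r2: "r2 \<in> carrier R2" "b = r2 \<odot>\<^bsub>B\<^esub> x2" using gen2 ab(3) by blast
    have "V1 r1 = g a" using gs[OF r1(1) x1] gx1 r1 by simp
    moreover have "V2 r2 = h b" using hs[OF r2(1) x2] hx2 r2 by simp
    ultimately have "(r1, r2) \<in> carrier RR" using r1 r2 ab by (simp add: pullback_simps)
    moreover have "y = (r1, r2) \<odot>\<^bsub>MM\<^esub> (x1, x2)" using ab r1 r2 by (simp add: pb_simps)
    ultimately show "y \<in> {r \<odot>\<^bsub>MM\<^esub> (x1, x2) | r. r \<in> carrier RR}" by blast
  qed
qed

lemma pb_separated: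
  assumes P1: "\<And>a. a \<in> P1 \<Longrightarrow> a \<in> carrier R1 \<and> V1 a = \<zero>\<^bsub>Rb\<^esub>"
    and P2: "\<And>a. a \<in> P2 \<Longrightarrow> a \<in> carrier R2 \<and> V2 a = \<zero>\<^bsub>Rb\<^esub>"
  shows "separated R1 R2 V1 V2 P1 P2 MM"
proof -
  interpret M: module RR MM by (rule pb_module_is_module)
  let ?K1 = "{y \<in> carrier MM. snd y = \<zero>\<^bsub>B\<^esub>}"
  let ?K2 = "{y \<in> carrier MM. fst y = \<zero>\<^bsub>A\<^esub> \<and> h (snd y) = \<zero>\<^bsub>Rb\<^esub>}"
  have K1: "submodule ?K1 RR MM"
    by (rule M.my_submoduleI) (auto simp: pb_simps pullback_simps g0 h0 ga ha gs hs A.smult_r_null B.smult_r_null)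
  have K2: "submodule ?K2 RR MM"
    by (rule M.my_submoduleI) (auto simp: pb_simps pullback_simps g0 h0 ga ha gs hs A.smult_r_null B.smult_r_null)
  have G1: "{r \<odot>\<^bsub>MM\<^esub> x | r x. r \<in> {(a, \<zero>\<^bsub>R2\<^esub>) | a. a \<in> P1} \<and> x \<in> carrier MM} \<subseteq> ?K1"
  proof
    fix z assume "z \<in> {r \<odot>\<^bsub>MM\<^esub> x | r x. r \<in> {(a, \<zero>\<^bsub>R2\<^esub>) | a. a \<in> P1} \<and> x \<in> carrier MM}"
    then obtain a x where a: "a \<in> P1" and x: "x \<in> carrier MM" and z: "z = (a, \<zero>\<^bsub>R2\<^esub>) \<odot>\<^bsub>MM\<^esub> x"
      by blast
    have "z \<in> carrier MM"
      using P1[OF a] M.smult_closed[of "(a, \<zero>\<^bsub>R2\<^esub>)" x] x z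
      by (simp add: pullback_simps)
    moreover have "snd z = \<zero>\<^bsub>B\<^esub>"
      using x z by (auto simp: pb_simps)
    ultimately show "z \<in> ?K1" by simp
  qed
  have G2: "{r \<odot>\<^bsub>MM\<^esub> x | r x. r \<in> {(\<zero>\<^bsub>R1\<^esub>, b) | b. b \<in> P2} \<and> x \<in> carrier MM} \<subseteq> ?K2"
  proof
    fix z assume "z \<in> {r \<odot>\<^bsub>MM\<^esub> x | r x. r \<in> {(\<zero>\<^bsub>R1\<^esub>, b) | b. b \<in> P2} \<and> x \<in> carrier MM}"
    then obtain a x where a: "a \<in> P2" and x: "x \<in> carrier MM" and z: "z = (\<zero>\<^bsub>R1\<^esub>, a) \<odot>\<^bsub>MM\<^esub> x"
      by blast
    have "z \<in> carrier MM"
      using P2[OF a] M.smult_closed[of "(\<zero>\<^bsub>R1\<^esub>, a)" x] x z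
      by (simp add: pullback_simps)
    moreover have "fst z = \<zero>\<^bsub>A\<^esub>"
      using x z by (auto simp: pb_simps)
    moreover have "h (snd z) = \<zero>\<^bsub>Rb\<^esub>"
      using x z P2[OF a] by (auto simp: pb_simps hs hc)
    ultimately show "z \<in> ?K2" by simp
  qed
  have sub1: "ideal_mod_prod RR {(a, \<zero>\<^bsub>R2\<^esub>) | a. a \<in> P1} MM \<subseteq> ?K1"
    unfolding ideal_mod_prod_def using K1 G1 by blast
  have sub2: "ideal_mod_prod RR {(\<zero>\<^bsub>R1\<^esub>, b) | b. b \<in> P2} MM \<subseteq> ?K2"
    unfolding ideal_mod_prod_def using K2 G2 by blast
  have z1: "\<zero>\<^bsub>MM\<^esub> \<in> ideal_mod_prod RR {(a, \<zero>\<^bsub>R2\<^esub>) | a. a \<in> P1} MM"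
    unfolding ideal_mod_prod_def using M.submodule_zero by blast
  have z2: "\<zero>\<^bsub>MM\<^esub> \<in> ideal_mod_prod RR {(\<zero>\<^bsub>R1\<^esub>, b) | b. b \<in> P2} MM"
    unfolding ideal_mod_prod_def using M.submodule_zero by blast
  have "?K1 \<inter> ?K2 \<subseteq> {\<zero>\<^bsub>MM\<^esub>}" by (auto simp: pb_simps)
  then show ?thesis unfolding separated_def using sub1 sub2 z1 z2 by blast
qed

end

lemma quot_inst:
  assumes R: "cring R" and Rb: "ring Rb" and V: "V \<in> ring_hom R Rb"
    and I: "ideal I R" and IK: "\<And>i. i \<in> I \<Longrightarrow> V i = \<zero>\<^bsub>Rb\<^esub>"
  shows "\<And>a. a \<in> carrier R \<Longrightarrow> induced_map V (I +>\<^bsub>R\<^esub> a) = V a"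
    and "carrier (quot_module R I) = (\<Union>a\<in>carrier R. {I +>\<^bsub>R\<^esub> a})"
    and "\<And>a b. a \<in> carrier R \<Longrightarrow> b \<in> carrier R \<Longrightarrow>
           (I +>\<^bsub>R\<^esub> a) \<oplus>\<^bsub>quot_module R I\<^esub> (I +>\<^bsub>R\<^esub> b) = I +>\<^bsub>R\<^esub> (a \<oplus>\<^bsub>R\<^esub> b)"
    and "\<And>r a. r \<in> carrier R \<Longrightarrow> a \<in> carrier R \<Longrightarrow>
           r \<odot>\<^bsub>quot_module R I\<^esub> (I +>\<^bsub>R\<^esub> a) = I +>\<^bsub>R\<^esub> (r \<otimes>\<^bsub>R\<^esub> a)"
proof -
  interpret cring R by fact
  interpret ideal I R by fact
  interpret hv: ring_hom_ring R Rb V using V by (intro ring_hom_ringI2 ring_axioms Rb)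
  show "induced_map V (I +>\<^bsub>R\<^esub> a) = V a" if a: "a \<in> carrier R" for a
  proof -
    have "V ` (I +>\<^bsub>R\<^esub> a) = {V a}"
    proof
      show "V ` (I +>\<^bsub>R\<^esub> a) \<subseteq> {V a}"
      proof
        fix y assume "y \<in> V ` (I +>\<^bsub>R\<^esub> a)"
        then obtain z where z: "z \<in> I +>\<^bsub>R\<^esub> a" "y = V z" by (rule imageE)
        from z(1) obtain i where i0: "i \<in> I" "z = i \<oplus>\<^bsub>R\<^esub> a"
          unfolding a_r_coset_def' by (rule UN_E) simp
        have i: "i \<in> I" "y = V (i \<oplus>\<^bsub>R\<^esub> a)" using i0 z(2) by auto
        have "i \<in> carrier R" using i(1) Icarr by blast
        then have "y = V i \<oplus>\<^bsub>Rb\<^esub> V a" using i(2) a by simp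
        also have "\<dots> = V a" using IK[OF i(1)] a by simp
        finally show "y \<in> {V a}" by simp
      qed
      have z0: "\<zero>\<^bsub>R\<^esub> \<in> I" by (rule zero_closed)
      have "\<zero>\<^bsub>R\<^esub> \<oplus>\<^bsub>R\<^esub> a \<in> I +>\<^bsub>R\<^esub> a" unfolding a_r_coset_def' by (rule UN_I[OF z0]) simp
      moreover have "\<zero>\<^bsub>R\<^esub> \<oplus>\<^bsub>R\<^esub> a = a" using a by simp
      ultimately show "{V a} \<subseteq> V ` (I +>\<^bsub>R\<^esub> a)" by (metis empty_subsetI image_eqI insert_subset)
    qed
    then show ?thesis by (simp add: induced_map_def)
  qed
  show "carrier (quot_module R I) = (\<Union>a\<in>carrier R. {I +>\<^bsub>R\<^esub> a})"
    by (simp add: quot_module_def A_RCOSETS_def')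
  show "\<And>a b. a \<in> carrier R \<Longrightarrow> b \<in> carrier R \<Longrightarrow>
           (I +>\<^bsub>R\<^esub> a) \<oplus>\<^bsub>quot_module R I\<^esub> (I +>\<^bsub>R\<^esub> b) = I +>\<^bsub>R\<^esub> (a \<oplus>\<^bsub>R\<^esub> b)"
    by (simp add: quot_module_def a_rcos_sum)
  show "\<And>r a. r \<in> carrier R \<Longrightarrow> a \<in> carrier R \<Longrightarrow>
           r \<odot>\<^bsub>quot_module R I\<^esub> (I +>\<^bsub>R\<^esub> a) = I +>\<^bsub>R\<^esub> (r \<otimes>\<^bsub>R\<^esub> a)"
    by (simp add: quot_module_def rcoset_mult_add)
qed

lemma dvr_unit:
  assumes d: "dvr R" and p: "p \<in> carrier R" and mx: "maximalideal (PIdl\<^bsub>R\<^esub> p) R"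
    and a: "a \<in> carrier R" and na: "a \<notin> PIdl\<^bsub>R\<^esub> p"
  shows "a \<in> Units R"
proof (rule ccontr)
  assume nu: "a \<notin> Units R"
  interpret principal_domain R using d by (simp add: dvr_def)
  have "\<zero>\<^bsub>R\<^esub> \<in> PIdl\<^bsub>R\<^esub> p" using p by (simp add: cgenideal_ideal additive_subgroup.zero_closed ideal.axioms(1))
  then have "a \<noteq> \<zero>\<^bsub>R\<^esub>" using na by auto
  then obtain b where b: "b \<in> carrier R" "ring_irreducible\<^bsub>R\<^esub> b" "b divides\<^bsub>R\<^esub> a"
    using exists_irreducible_divisor[of a] a nu by blast
  have "maximalideal (PIdl\<^bsub>R\<^esub> b) R" using irreducible_imp_maximalideal b by blast
  then have "PIdl\<^bsub>R\<^esub> b = PIdl\<^bsub>R\<^esub> p" using mx d unfolding dvr_def by blast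
  moreover have "a \<in> PIdl\<^bsub>R\<^esub> b"
    using to_contain_is_to_divide[OF b(1) a] b(3) cgenideal_self[OF a] by blast
  ultimately show False using na by simp
qed

definition side where
  "side R Rb V A g x \<longleftrightarrow> module R A \<and> (\<forall>a\<in>carrier A. g a \<in> carrier Rb) \<and>
     (\<forall>a\<in>carrier A. \<forall>b\<in>carrier A. g (a \<oplus>\<^bsub>A\<^esub> b) = g a \<oplus>\<^bsub>Rb\<^esub> g b) \<and>
     (\<forall>r\<in>carrier R. \<forall>a\<in>carrier A. g (r \<odot>\<^bsub>A\<^esub> a) = V r \<otimes>\<^bsub>Rb\<^esub> g a) \<and>
     x \<in> carrier A \<and> g x = \<one>\<^bsub>Rb\<^esub> \<and> (\<forall>a\<in>carrier A. \<exists>r\<in>carrier R. a = r \<odot>\<^bsub>A\<^esub> x)"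

lemma pbm_from_side:
  "field Rb \<Longrightarrow> V1 \<in> ring_hom R1 Rb \<Longrightarrow> V2 \<in> ring_hom R2 Rb \<Longrightarrow>
   side R1 Rb V1 A g x1 \<Longrightarrow> side R2 Rb V2 B h x2 \<Longrightarrow> pbm R1 R2 Rb V1 V2 A B g h x1 x2"
  unfolding side_def by (intro pbm.intro) auto

lemma side_self:
  assumes R: "cring R" and Rb: "ring Rb" and V: "V \<in> ring_hom R Rb"
  shows "side R Rb V (self_module R) V \<one>\<^bsub>R\<^esub>"
proof -
  interpret cring R by fact
  interpret hv: ring_hom_ring R Rb V using V by (intro ring_hom_ringI2 ring_axioms Rb)
  have m: "module R (self_module R)" by (rule self_module_module[OF R])
  show ?thesis unfolding side_def
  proof (intro conjI m)
    show "\<forall>a\<in>carrier (self_module R). \<exists>r\<in>carrier R. a = r \<odot>\<^bsub>self_module R\<^esub> \<one>\<^bsub>R\<^esub>"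
    proof
      fix a assume "a \<in> carrier (self_module R)"
      then have a: "a \<in> carrier R" by (simp add: self_module_def)
      then have "a = a \<odot>\<^bsub>self_module R\<^esub> \<one>\<^bsub>R\<^esub>" by (simp add: self_module_def)
      then show "\<exists>r\<in>carrier R. a = r \<odot>\<^bsub>self_module R\<^esub> \<one>\<^bsub>R\<^esub>" using a by blast
    qed
  qed (auto simp: self_module_def)
qed

lemma side_quot:
  assumes R: "cring R" and Rb: "ring Rb" and V: "V \<in> ring_hom R Rb"
    and I: "ideal I R" and IK: "\<And>i. i \<in> I \<Longrightarrow> V i = \<zero>\<^bsub>Rb\<^esub>"
  shows "side R Rb V (quot_module R I) (induced_map V) (I +>\<^bsub>R\<^esub> \<one>\<^bsub>R\<^esub>)"
proof -
  interpret cring R by fact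
  interpret hv: ring_hom_ring R Rb V using V by (intro ring_hom_ringI2 ring_axioms Rb)
  note q = quot_inst[OF R Rb V I IK]
  show ?thesis unfolding side_def
  proof (intro conjI)
    show "module R (quot_module R I)" by (rule quot_module_module[OF R I])
    show "\<forall>a\<in>carrier (quot_module R I). induced_map V a \<in> carrier Rb"
      using q(1,2) by auto
    show "\<forall>a\<in>carrier (quot_module R I). \<forall>b\<in>carrier (quot_module R I).
      induced_map V (a \<oplus>\<^bsub>quot_module R I\<^esub> b) = induced_map V a \<oplus>\<^bsub>Rb\<^esub> induced_map V b"
      using q(1-3) by auto
    show "\<forall>r\<in>carrier R. \<forall>a\<in>carrier (quot_module R I).
      induced_map V (r \<odot>\<^bsub>quot_module R I\<^esub> a) = V r \<otimes>\<^bsub>Rb\<^esub> induced_map V a"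
      using q(1,2,4) by auto
    show "I +>\<^bsub>R\<^esub> \<one>\<^bsub>R\<^esub> \<in> carrier (quot_module R I)" using q(2) by auto
    show "induced_map V (I +>\<^bsub>R\<^esub> \<one>\<^bsub>R\<^esub>) = \<one>\<^bsub>Rb\<^esub>" using q(1) by simp
    show "\<forall>a\<in>carrier (quot_module R I). \<exists>r\<in>carrier R. a = r \<odot>\<^bsub>quot_module R I\<^esub> (I +>\<^bsub>R\<^esub> \<one>\<^bsub>R\<^esub>)"
      using q(2,4) by force
  qed
qed

locale pbset =
  fixes R1 :: "'a ring" and R2 :: "'b ring" and Rb :: "'c ring"
    and p1 :: 'a and p2 :: 'b and V1 :: "'a \<Rightarrow> 'c" and V2 :: "'b \<Rightarrow> 'c"
  assumes dvr1: "dvr R1" and dvr2: "dvr R2"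
    and p1: "p1 \<in> carrier R1" and p2: "p2 \<in> carrier R2"
    and max1: "maximalideal (PIdl\<^bsub>R1\<^esub> p1) R1" and max2: "maximalideal (PIdl\<^bsub>R2\<^esub> p2) R2"
    and fRb: "field Rb"
    and hom1: "V1 \<in> ring_hom R1 Rb" and ker1: "a_kernel R1 Rb V1 = PIdl\<^bsub>R1\<^esub> p1"
    and hom2: "V2 \<in> ring_hom R2 Rb" and ker2: "a_kernel R2 Rb V2 = PIdl\<^bsub>R2\<^esub> p2"
begin

interpretation r1: principal_domain R1 using dvr1 by (simp add: dvr_def)
interpretation r2: principal_domain R2 using dvr2 by (simp add: dvr_def)
interpretation F: field Rb by (rule fRb)
interpretation H1: ring_hom_cring R1 Rb V1
  using hom1 by (intro ring_hom_cringI r1.is_cring F.is_cring)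
interpretation H2: ring_hom_cring R2 Rb V2
  using hom2 by (intro ring_hom_cringI r2.is_cring F.is_cring)

abbreviation "RP \<equiv> pullback_ring R1 R2 V1 V2"

lemma RR_cring: "cring RP"
  by (rule pullback_cring[OF r1.is_cring r2.is_cring F.ring_axioms hom1 hom2])

lemma K1: "{x \<in> carrier R1. V1 x = \<zero>\<^bsub>Rb\<^esub>} = PIdl\<^bsub>R1\<^esub> p1"
  using ker1 by (simp only: a_kernel_def')
lemma K2: "{x \<in> carrier R2. V2 x = \<zero>\<^bsub>Rb\<^esub>} = PIdl\<^bsub>R2\<^esub> p2"
  using ker2 by (simp only: a_kernel_def')

lemma kerI1: "a \<in> carrier R1 \<Longrightarrow> (V1 a = \<zero>\<^bsub>Rb\<^esub>) = (a \<in> PIdl\<^bsub>R1\<^esub> p1)"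
  using K1 by blast
lemma kerI2: "a \<in> carrier R2 \<Longrightarrow> (V2 a = \<zero>\<^bsub>Rb\<^esub>) = (a \<in> PIdl\<^bsub>R2\<^esub> p2)"
  using K2 by blast

lemma P1K: "a \<in> PIdl\<^bsub>R1\<^esub> p1 \<Longrightarrow> a \<in> carrier R1 \<and> V1 a = \<zero>\<^bsub>Rb\<^esub>"
  using K1 by blast
lemma P2K: "a \<in> PIdl\<^bsub>R2\<^esub> p2 \<Longrightarrow> a \<in> carrier R2 \<and> V2 a = \<zero>\<^bsub>Rb\<^esub>"
  using K2 by blast

lemma RR_unit:
  assumes x: "x \<in> carrier RP" and nz: "V1 (fst x) \<noteq> \<zero>\<^bsub>Rb\<^esub>"
  shows "x \<in> Units RP"
proof -
  obtain a b where ab: "x = (a, b)" "a \<in> carrier R1" "b \<in> carrier R2" "V1 a = V2 b"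
    using x by (auto simp: pullback_simps)
  have ua: "a \<in> Units R1" using dvr_unit[OF dvr1 p1 max1 ab(2)] kerI1[OF ab(2)] nz ab(1) by auto
  have ub: "b \<in> Units R2" using dvr_unit[OF dvr2 p2 max2 ab(3)] kerI2[OF ab(3)] nz ab by auto
  let ?a = "inv\<^bsub>R1\<^esub> a" and ?b = "inv\<^bsub>R2\<^esub> b"
  have ac: "?a \<in> carrier R1" and bc: "?b \<in> carrier R2" using ua ub by auto
  have e1: "V1 ?a \<otimes>\<^bsub>Rb\<^esub> V1 a = \<one>\<^bsub>Rb\<^esub>"
    using ua ac ab(2) H1.hom_mult[of ?a a, symmetric] by simp
  have e2: "V2 b \<otimes>\<^bsub>Rb\<^esub> V2 ?b = \<one>\<^bsub>Rb\<^esub>"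
    using ub bc ab(3) H2.hom_mult[of b ?b, symmetric] by simp
  have "V1 ?a = V1 ?a \<otimes>\<^bsub>Rb\<^esub> (V2 b \<otimes>\<^bsub>Rb\<^esub> V2 ?b)" using e2 ac by simp
  also have "\<dots> = (V1 ?a \<otimes>\<^bsub>Rb\<^esub> V1 a) \<otimes>\<^bsub>Rb\<^esub> V2 ?b"
    using ab ac bc by (simp add: F.m_assoc)
  also have "\<dots> = V2 ?b" using e1 bc by simp
  finally have "V1 ?a = V2 ?b" .
  then have "(?a, ?b) \<in> carrier RP" using ac bc by (simp add: pullback_simps)
  then have c: "(?a, ?b) \<in> carrier RP" .
  have l: "(?a, ?b) \<otimes>\<^bsub>RP\<^esub> x = \<one>\<^bsub>RP\<^esub>" using ab ua ub by (simp add: pullback_simps)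
  have r: "x \<otimes>\<^bsub>RP\<^esub> (?a, ?b) = \<one>\<^bsub>RP\<^esub>" using ab ua ub by (simp add: pullback_simps)
  show ?thesis unfolding Units_def using x c l r by blast
qed

lemma RR_neg: "x \<in> carrier RP \<Longrightarrow> \<ominus>\<^bsub>RP\<^esub> x = (\<ominus>\<^bsub>R1\<^esub> fst x, \<ominus>\<^bsub>R2\<^esub> snd x)"
proof -
  assume x: "x \<in> carrier RP"
  interpret C: cring RP by (rule RR_cring)
  have c: "(\<ominus>\<^bsub>R1\<^esub> fst x, \<ominus>\<^bsub>R2\<^esub> snd x) \<in> carrier RP"
    using x by (auto simp: pullback_simps H1.hom_a_inv H2.hom_a_inv)
  show ?thesis
    by (rule C.minus_equality) (use x c in \<open>auto simp: pullback_simps r1.l_neg r2.l_neg\<close>)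
qed

lemma RR_loc2:
  assumes a: "a \<in> carrier RP" and b: "b \<in> carrier RP"
    and za: "V1 (fst a) = \<zero>\<^bsub>Rb\<^esub>" and zb: "V1 (fst b) = \<zero>\<^bsub>Rb\<^esub>"
  shows "V1 (fst (\<one>\<^bsub>RP\<^esub> \<ominus>\<^bsub>RP\<^esub> (a \<oplus>\<^bsub>RP\<^esub> b))) \<noteq> \<zero>\<^bsub>Rb\<^esub>"
proof -
  interpret C: cring RP by (rule RR_cring)
  have ab: "a \<oplus>\<^bsub>RP\<^esub> b \<in> carrier RP" using a b by simp
  have "fst (\<one>\<^bsub>RP\<^esub> \<ominus>\<^bsub>RP\<^esub> (a \<oplus>\<^bsub>RP\<^esub> b)) = \<one>\<^bsub>R1\<^esub> \<oplus>\<^bsub>R1\<^esub> \<ominus>\<^bsub>R1\<^esub> (fst a \<oplus>\<^bsub>R1\<^esub> fst b)"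
    using RR_neg[OF ab] by (simp add: a_minus_def pullback_simps)
  moreover have "fst a \<in> carrier R1" "fst b \<in> carrier R1" using a b by (auto simp: pullback_simps)
  ultimately have "V1 (fst (\<one>\<^bsub>RP\<^esub> \<ominus>\<^bsub>RP\<^esub> (a \<oplus>\<^bsub>RP\<^esub> b))) = \<one>\<^bsub>Rb\<^esub>"
    using za zb by (simp add: H1.hom_a_inv)
  then show ?thesis by simp
qed

lemma cyclic_all:
  assumes M: "module RP M" and x: "x \<in> carrier M"
    and cyc: "carrier M = {r \<odot>\<^bsub>M\<^esub> x | r. r \<in> carrier RP}" and nz: "x \<noteq> \<zero>\<^bsub>M\<^esub>"
  shows "indecomposable RP M \<and> pap_multiplication_module RP M"
proof -
  interpret M: module RP M by (rule M)
  show ?thesis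
  proof
    show "indecomposable RP M"
      by (rule M.cyclic_indecomp[OF x cyc nz, where \<phi>="\<lambda>a. V1 (fst a) = \<zero>\<^bsub>Rb\<^esub>"])
         (use RR_unit RR_loc2 in auto)
    show "pap_multiplication_module RP M" by (rule M.cyclic_pap[OF x cyc])
  qed
qed

lemma pb_all:
  assumes "side R1 Rb V1 A g x1" "side R2 Rb V2 B h x2"
  shows "module RP (pb_module A B g h) \<and> separated R1 R2 V1 V2 (PIdl\<^bsub>R1\<^esub> p1) (PIdl\<^bsub>R2\<^esub> p2) (pb_module A B g h)
    \<and> indecomposable RP (pb_module A B g h) \<and> pap_multiplication_module RP (pb_module A B g h)"
proof -
  interpret pbm R1 R2 Rb V1 V2 A B g h x1 x2
    by (rule pbm_from_side[OF fRb hom1 hom2 assms])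
  show ?thesis
    using pb_module_is_module pb_separated[OF P1K P2K] cyclic_all[OF pb_module_is_module gen_in pb_cyclic gen_nz]
    by blast
qed

lemma self_all:
  "module RP (self_module RP) \<and> separated R1 R2 V1 V2 (PIdl\<^bsub>R1\<^esub> p1) (PIdl\<^bsub>R2\<^esub> p2) (self_module RP)
    \<and> indecomposable RP (self_module RP) \<and> pap_multiplication_module RP (self_module RP)"
proof -
  interpret C: cring RP by (rule RR_cring)
  have M: "module RP (self_module RP)" by (rule self_module_module[OF RR_cring])
  interpret M: module RP "self_module RP" by (rule M)
  have sc: "carrier (self_module RP) = carrier RP" "\<And>x y. x \<oplus>\<^bsub>self_module RP\<^esub> y = x \<oplus>\<^bsub>RP\<^esub> y"
    "\<zero>\<^bsub>self_module RP\<^esub> = \<zero>\<^bsub>RP\<^esub>" "\<And>r x. r \<odot>\<^bsub>self_module RP\<^esub> x = r \<otimes>\<^bsub>RP\<^esub> x"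
    by (simp_all add: self_module_def)
  have one: "\<one>\<^bsub>RP\<^esub> \<in> carrier (self_module RP)" using sc by simp
  have cyc: "carrier (self_module RP) = {r \<odot>\<^bsub>self_module RP\<^esub> \<one>\<^bsub>RP\<^esub> | r. r \<in> carrier RP}"
  proof
    show "carrier (self_module RP) \<subseteq> {r \<odot>\<^bsub>self_module RP\<^esub> \<one>\<^bsub>RP\<^esub> | r. r \<in> carrier RP}"
    proof
      fix x assume "x \<in> carrier (self_module RP)"
      then have x: "x \<in> carrier RP" using sc by simp
      then have "x = x \<odot>\<^bsub>self_module RP\<^esub> \<one>\<^bsub>RP\<^esub>" using sc by simp
      then show "x \<in> {r \<odot>\<^bsub>self_module RP\<^esub> \<one>\<^bsub>RP\<^esub> | r. r \<in> carrier RP}" using x by blast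
    qed
  qed (use sc in auto)
  have nz: "\<one>\<^bsub>RP\<^esub> \<noteq> \<zero>\<^bsub>self_module RP\<^esub>" using sc(3) by (simp add: pullback_simps)
  have sep: "separated R1 R2 V1 V2 (PIdl\<^bsub>R1\<^esub> p1) (PIdl\<^bsub>R2\<^esub> p2) (self_module RP)"
  proof -
    let ?MM = "self_module RP"
    let ?K1 = "{y \<in> carrier RP. snd y = \<zero>\<^bsub>R2\<^esub> \<and> V1 (fst y) = \<zero>\<^bsub>Rb\<^esub>}"
    let ?K2 = "{y \<in> carrier RP. fst y = \<zero>\<^bsub>R1\<^esub> \<and> V2 (snd y) = \<zero>\<^bsub>Rb\<^esub>}"
    have K1: "submodule ?K1 RP ?MM"
      by (rule M.my_submoduleI) (auto simp: sc pullback_simps)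
    have K2: "submodule ?K2 RP ?MM"
      by (rule M.my_submoduleI) (auto simp: sc pullback_simps)
    have G1: "{r \<odot>\<^bsub>?MM\<^esub> x | r x. r \<in> {(a, \<zero>\<^bsub>R2\<^esub>) | a. a \<in> PIdl\<^bsub>R1\<^esub> p1} \<and> x \<in> carrier ?MM} \<subseteq> ?K1"
    proof
      fix z assume "z \<in> {r \<odot>\<^bsub>?MM\<^esub> x | r x. r \<in> {(a, \<zero>\<^bsub>R2\<^esub>) | a. a \<in> PIdl\<^bsub>R1\<^esub> p1} \<and> x \<in> carrier ?MM}"
      then obtain a x where a: "a \<in> PIdl\<^bsub>R1\<^esub> p1" and x: "x \<in> carrier RP" and z: "z = (a, \<zero>\<^bsub>R2\<^esub>) \<otimes>\<^bsub>RP\<^esub> x"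
        using sc by auto
      have ac: "(a, \<zero>\<^bsub>R2\<^esub>) \<in> carrier RP" using P1K[OF a] by (simp add: pullback_simps)
      have "z \<in> carrier RP" using ac x z by simp
      moreover have "snd z = \<zero>\<^bsub>R2\<^esub>" using x z by (auto simp: pullback_simps)
      moreover have "V1 (fst z) = \<zero>\<^bsub>Rb\<^esub>" using x z P1K[OF a] by (auto simp: pullback_simps)
      ultimately show "z \<in> ?K1" by simp
    qed
    have G2: "{r \<odot>\<^bsub>?MM\<^esub> x | r x. r \<in> {(\<zero>\<^bsub>R1\<^esub>, b) | b. b \<in> PIdl\<^bsub>R2\<^esub> p2} \<and> x \<in> carrier ?MM} \<subseteq> ?K2"
    proof
      fix z assume "z \<in> {r \<odot>\<^bsub>?MM\<^esub> x | r x. r \<in> {(\<zero>\<^bsub>R1\<^esub>, b) | b. b \<in> PIdl\<^bsub>R2\<^esub> p2} \<and> x \<in> carrier ?MM}"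
      then obtain a x where a: "a \<in> PIdl\<^bsub>R2\<^esub> p2" and x: "x \<in> carrier RP" and z: "z = (\<zero>\<^bsub>R1\<^esub>, a) \<otimes>\<^bsub>RP\<^esub> x"
        using sc by auto
      have ac: "(\<zero>\<^bsub>R1\<^esub>, a) \<in> carrier RP" using P2K[OF a] by (simp add: pullback_simps)
      have "z \<in> carrier RP" using ac x z by simp
      moreover have "fst z = \<zero>\<^bsub>R1\<^esub>" using x z by (auto simp: pullback_simps)
      moreover have "V2 (snd z) = \<zero>\<^bsub>Rb\<^esub>" using x z P2K[OF a] by (auto simp: pullback_simps)
      ultimately show "z \<in> ?K2" by simp
    qed
    have sub1: "ideal_mod_prod RP {(a, \<zero>\<^bsub>R2\<^esub>) | a. a \<in> PIdl\<^bsub>R1\<^esub> p1} ?MM \<subseteq> ?K1"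
      unfolding ideal_mod_prod_def using K1 G1 by blast
    have sub2: "ideal_mod_prod RP {(\<zero>\<^bsub>R1\<^esub>, b) | b. b \<in> PIdl\<^bsub>R2\<^esub> p2} ?MM \<subseteq> ?K2"
      unfolding ideal_mod_prod_def using K2 G2 by blast
    have z1: "\<zero>\<^bsub>?MM\<^esub> \<in> ideal_mod_prod RP {(a, \<zero>\<^bsub>R2\<^esub>) | a. a \<in> PIdl\<^bsub>R1\<^esub> p1} ?MM"
      unfolding ideal_mod_prod_def using M.submodule_zero by blast
    have z2: "\<zero>\<^bsub>?MM\<^esub> \<in> ideal_mod_prod RP {(\<zero>\<^bsub>R1\<^esub>, b) | b. b \<in> PIdl\<^bsub>R2\<^esub> p2} ?MM"
      unfolding ideal_mod_prod_def using M.submodule_zero by blast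
    have "?K1 \<inter> ?K2 \<subseteq> {\<zero>\<^bsub>?MM\<^esub>}" using sc(3) by (auto simp: pullback_simps)
    then show ?thesis unfolding separated_def using sub1 sub2 z1 z2 by blast
  qed
  show ?thesis using M sep cyclic_all[OF M one cyc nz] by blast
qed

lemma pow_ker1: "(n::nat) \<ge> 1 \<Longrightarrow> i \<in> PIdl\<^bsub>R1\<^esub> (p1 [^]\<^bsub>R1\<^esub> n) \<Longrightarrow> V1 i = \<zero>\<^bsub>Rb\<^esub>"
proof -
  assume n: "n \<ge> 1" and i: "i \<in> PIdl\<^bsub>R1\<^esub> (p1 [^]\<^bsub>R1\<^esub> n)"
  obtain k where k: "n = Suc k" using n by (cases n) auto
  obtain x where x: "x \<in> carrier R1" "i = x \<otimes>\<^bsub>R1\<^esub> p1 [^]\<^bsub>R1\<^esub> n" using i by (auto simp: cgenideal_def)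
  have "i = (x \<otimes>\<^bsub>R1\<^esub> p1 [^]\<^bsub>R1\<^esub> k) \<otimes>\<^bsub>R1\<^esub> p1" using x k p1 by (simp add: r1.m_assoc)
  then have "i \<in> PIdl\<^bsub>R1\<^esub> p1" using x p1 by (auto simp: cgenideal_def)
  then show ?thesis using P1K by blast
qed

lemma pow_ker2: "(n::nat) \<ge> 1 \<Longrightarrow> i \<in> PIdl\<^bsub>R2\<^esub> (p2 [^]\<^bsub>R2\<^esub> n) \<Longrightarrow> V2 i = \<zero>\<^bsub>Rb\<^esub>"
proof -
  assume n: "n \<ge> 1" and i: "i \<in> PIdl\<^bsub>R2\<^esub> (p2 [^]\<^bsub>R2\<^esub> n)"
  obtain k where k: "n = Suc k" using n by (cases n) auto
  obtain x where x: "x \<in> carrier R2" "i = x \<otimes>\<^bsub>R2\<^esub> p2 [^]\<^bsub>R2\<^esub> n" using i by (auto simp: cgenideal_def)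
  have "i = (x \<otimes>\<^bsub>R2\<^esub> p2 [^]\<^bsub>R2\<^esub> k) \<otimes>\<^bsub>R2\<^esub> p2" using x k p2 by (simp add: r2.m_assoc)
  then have "i \<in> PIdl\<^bsub>R2\<^esub> p2" using x p2 by (auto simp: cgenideal_def)
  then show ?thesis using P2K by blast
qed

lemma side_q1: "(n::nat) \<ge> 1 \<Longrightarrow> side R1 Rb V1 (quot_module R1 (PIdl\<^bsub>R1\<^esub> (p1 [^]\<^bsub>R1\<^esub> n))) (induced_map V1)
   (PIdl\<^bsub>R1\<^esub> (p1 [^]\<^bsub>R1\<^esub> n) +>\<^bsub>R1\<^esub> \<one>\<^bsub>R1\<^esub>)"
  by (rule side_quot[OF r1.is_cring F.ring_axioms hom1 r1.cgenideal_ideal pow_ker1]) (use p1 in \<open>auto intro: r1.nat_pow_closed\<close>)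

lemma side_q2: "(n::nat) \<ge> 1 \<Longrightarrow> side R2 Rb V2 (quot_module R2 (PIdl\<^bsub>R2\<^esub> (p2 [^]\<^bsub>R2\<^esub> n))) (induced_map V2)
   (PIdl\<^bsub>R2\<^esub> (p2 [^]\<^bsub>R2\<^esub> n) +>\<^bsub>R2\<^esub> \<one>\<^bsub>R2\<^esub>)"
  by (rule side_quot[OF r2.is_cring F.ring_axioms hom2 r2.cgenideal_ideal pow_ker2]) (use p2 in \<open>auto intro: r2.nat_pow_closed\<close>)

lemma side_s1: "side R1 Rb V1 (self_module R1) V1 \<one>\<^bsub>R1\<^esub>"
  by (rule side_self[OF r1.is_cring F.ring_axioms hom1])
lemma side_s2: "side R2 Rb V2 (self_module R2) V2 \<one>\<^bsub>R2\<^esub>"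
  by (rule side_self[OF r2.is_cring F.ring_axioms hom2])

end

theorem corollary3p3:
  fixes R1 :: "'a ring" and R2 :: "'b ring" and Rb :: "'c ring"
    and p1 :: 'a and p2 :: 'b and V1 :: "'a \<Rightarrow> 'c" and V2 :: "'b \<Rightarrow> 'c"
    and n m :: nat
  assumes "dvr R1" and "dvr R2"
    and "p1 \<in> carrier R1" and "p2 \<in> carrier R2"
    and "maximalideal (PIdl\<^bsub>R1\<^esub> p1) R1" and "maximalideal (PIdl\<^bsub>R2\<^esub> p2) R2"
    and "field Rb"
    and "V1 \<in> ring_hom R1 Rb" and "V1 ` carrier R1 = carrier Rb"
    and "a_kernel R1 Rb V1 = PIdl\<^bsub>R1\<^esub> p1"
    and "V2 \<in> ring_hom R2 Rb" and "V2 ` carrier R2 = carrier Rb"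
    and "a_kernel R2 Rb V2 = PIdl\<^bsub>R2\<^esub> p2"
    and "n \<ge> 1" and "m \<ge> 1"
  shows
    "let R = pullback_ring R1 R2 V1 V2;
         P1 = PIdl\<^bsub>R1\<^esub> p1; P2 = PIdl\<^bsub>R2\<^esub> p2;
         M1 = self_module R;
         M2 = pb_module (quot_module R1 (PIdl\<^bsub>R1\<^esub> (p1 [^]\<^bsub>R1\<^esub> n)))
                        (quot_module R2 (PIdl\<^bsub>R2\<^esub> (p2 [^]\<^bsub>R2\<^esub> m)))
                        (induced_map V1) (induced_map V2);
         M3 = pb_module (self_module R1)
                        (quot_module R2 (PIdl\<^bsub>R2\<^esub> (p2 [^]\<^bsub>R2\<^esub> m)))
                        V1 (induced_map V2);
         M4 = pb_module (quot_module R1 (PIdl\<^bsub>R1\<^esub> (p1 [^]\<^bsub>R1\<^esub> n)))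
                        (self_module R2)
                        (induced_map V1) V2
     in (module R M1 \<and> separated R1 R2 V1 V2 P1 P2 M1 \<and>
           indecomposable R M1 \<and> pap_multiplication_module R M1)
      \<and> (module R M2 \<and> separated R1 R2 V1 V2 P1 P2 M2 \<and>
           indecomposable R M2 \<and> pap_multiplication_module R M2)
      \<and> (module R M3 \<and> separated R1 R2 V1 V2 P1 P2 M3 \<and>
           indecomposable R M3 \<and> pap_multiplication_module R M3)
      \<and> (module R M4 \<and> separated R1 R2 V1 V2 P1 P2 M4 \<and>
           indecomposable R M4 \<and> pap_multiplication_module R M4)"
proof -
  interpret P: pbset R1 R2 Rb p1 p2 V1 V2
    by (rule pbset.intro) (rule assms)+
  have n: "n \<ge> 1" and m: "m \<ge> 1" using assms by auto
  note A1 = P.self_all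
  note A2 = P.pb_all[OF P.side_q1[OF n] P.side_q2[OF m]]
  note A3 = P.pb_all[OF P.side_s1 P.side_q2[OF m]]
  note A4 = P.pb_all[OF P.side_q1[OF n] P.side_s2]
  show ?thesis unfolding Let_def using A1 A2 A3 A4 by blast
qed

end
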